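(* For any function quasi-norm $\rho$ over a $\sigma$-finite measure space $(\Omega,\Sigma,\mu)$ we have $L_\rho^d\subseteq L_\rho^b$.
   Context: $L_0^+(\mu)$ / $L_0(\mu)$: measurable functions $\Omega\to[0,\infty]$ / $\Omega\to\mathbb{F}$ modulo a.e. equality. A function quasi-norm is $\rho\colon L_0^+(\mu)\to[0,\infty]$ with (F1) $\rho(tf)=t\rho(f)$, $t\ge0$; (F2) $f\le g$ a.e. $\Rightarrow\rho(f)\le\rho(g)$; (F3) $\rho(\chi_E)<\infty$ if $\mu(E)<\infty$; (F4) for all $E$ with $\mu(E)<\infty$ and $\varepsilon>0$ there is $\delta>0$ with $\mu(A)\le\varepsilon$ whenever $A\subseteq E$ measurable and $\rho(\chi_A)\le\delta$; (F5) $\rho(f+g)\le\kappa(\rho(f)+\rho(g))$. $L_\rho=\{f\in L_0(\mu):\rho(|f|)<\infty\}$ with quasi-norm $\rho(|f|)$. A function $g\in L_0^+(\mu)$ with $\rho(g)<\infty$ is dominating if $\lim_n\rho(g_n)=0$ for every non-increasing $(g_n)$ in $L_0^+(\mu)$ with $g_1\le g$ and $\lim_ng_n=0$. $L_\rho^d=\{f\in L_\rho:|f|\text{ is dominating}\}$. $L_\rho^b$ is the closure in $L_\rho$ of $\mathcal{S}(\mu)=\operatorname{span}\{\chi_E:E\in\Sigma,\ \mu(E)<\infty\}$. *)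

theory Defs
  imports "HOL-Analysis.Analysis"
begin

text \<open>Elements of L_0^+(mu) are represented by Borel measurable functions into ennreal;
  rho is a map on all such functions whose axioms are imposed on measurable ones.
  By (F2) applied in both directions, rho is automatically invariant under a.e. equality.\<close>

definition function_quasi_norm :: "'a measure \<Rightarrow> (('a \<Rightarrow> ennreal) \<Rightarrow> ennreal) \<Rightarrow> bool" where
  "function_quasi_norm M \<rho> \<longleftrightarrow>
     \<comment> \<open>(F1)\<close>
     (\<forall>f \<in> borel_measurable M. \<forall>t::real. t \<ge> 0 \<longrightarrow>
         \<rho> (\<lambda>x. ennreal t * f x) = ennreal t * \<rho> f) \<and>
     \<comment> \<open>(F2)\<close>
     (\<forall>f \<in> borel_measurable M. \<forall>g \<in> borel_measurable M.
         (AE x in M. f x \<le> g x) \<longrightarrow> \<rho> f \<le> \<rho> g) \<and>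
     \<comment> \<open>(F3)\<close>
     (\<forall>E \<in> sets M. emeasure M E < \<infinity> \<longrightarrow> \<rho> (indicator E) < \<infinity>) \<and>
     \<comment> \<open>(F4)\<close>
     (\<forall>E \<in> sets M. emeasure M E < \<infinity> \<longrightarrow>
        (\<forall>\<epsilon>::real. \<epsilon> > 0 \<longrightarrow> (\<exists>\<delta>::real. \<delta> > 0 \<and>
           (\<forall>A \<in> sets M. A \<subseteq> E \<and> \<rho> (indicator A) \<le> ennreal \<delta> \<longrightarrow>
               emeasure M A \<le> ennreal \<epsilon>)))) \<and>
     \<comment> \<open>(F5)\<close>
     (\<exists>\<kappa>::real. \<forall>f \<in> borel_measurable M. \<forall>g \<in> borel_measurable M.
         \<rho> (\<lambda>x. f x + g x) \<le> ennreal \<kappa> * (\<rho> f + \<rho> g))"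

definition fmod :: "('a \<Rightarrow> 'b::real_normed_field) \<Rightarrow> 'a \<Rightarrow> ennreal" where
  "fmod f = (\<lambda>x. ennreal (norm (f x)))"

definition L_rho :: "'a measure \<Rightarrow> (('a \<Rightarrow> ennreal) \<Rightarrow> ennreal) \<Rightarrow> ('a \<Rightarrow> 'b::real_normed_field) set" where
  "L_rho M \<rho> = {f. f \<in> borel_measurable M \<and> \<rho> (fmod f) < \<infinity>}"

definition dominating :: "'a measure \<Rightarrow> (('a \<Rightarrow> ennreal) \<Rightarrow> ennreal) \<Rightarrow> ('a \<Rightarrow> ennreal) \<Rightarrow> bool" where
  "dominating M \<rho> g \<longleftrightarrow> g \<in> borel_measurable M \<and> \<rho> g < \<infinity> \<and>
     (\<forall>gs :: nat \<Rightarrow> 'a \<Rightarrow> ennreal.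
        (\<forall>n. gs n \<in> borel_measurable M) \<and>
        (\<forall>n. AE x in M. gs (Suc n) x \<le> gs n x) \<and>
        (AE x in M. gs 0 x \<le> g x) \<and>
        (AE x in M. (\<lambda>n. gs n x) \<longlonglongrightarrow> 0)
        \<longrightarrow> (\<lambda>n. \<rho> (gs n)) \<longlonglongrightarrow> 0)"

definition L_rho_d :: "'a measure \<Rightarrow> (('a \<Rightarrow> ennreal) \<Rightarrow> ennreal) \<Rightarrow> ('a \<Rightarrow> 'b::real_normed_field) set" where
  "L_rho_d M \<rho> = {f \<in> L_rho M \<rho>. dominating M \<rho> (fmod f)}"

definition simple_span :: "'a measure \<Rightarrow> ('a \<Rightarrow> 'b::real_normed_field) set" where
  "simple_span M = {(\<lambda>x. \<Sum>i\<in>I. c i * indicator (E i) x) | (I :: nat set) c E.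
      finite I \<and> (\<forall>i\<in>I. E i \<in> sets M \<and> emeasure M (E i) < \<infinity>)}"

text \<open>Closure of S(mu) in L_rho with respect to the quasi-norm f \<mapsto> rho(|f|):
  the sets {g. rho(|f - g|) < eps} form a neighbourhood base of f.\<close>
definition L_rho_b :: "'a measure \<Rightarrow> (('a \<Rightarrow> ennreal) \<Rightarrow> ennreal) \<Rightarrow> ('a \<Rightarrow> 'b::real_normed_field) set" where
  "L_rho_b M \<rho> = {f \<in> L_rho M \<rho>. \<forall>\<epsilon>::real. \<epsilon> > 0 \<longrightarrow>
      (\<exists>s \<in> simple_span M. \<rho> (fmod (\<lambda>x. f x - s x)) < ennreal \<epsilon>)}"

end

theory Submission
  imports Defs
begin

lemma simple_in_span:
  fixes g :: "'a \<Rightarrow> 'b::real_normed_field"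
  assumes g: "simple_function M g" and E: "E \<in> sets M" "emeasure M E < \<infinity>"
  shows "(\<lambda>x. g x * indicator E x) \<in> simple_span M"
proof -
  define V where "V = g ` space M"
  have finV: "finite V" using g unfolding V_def simple_function_def by simp
  define S where "S v = g -` {v} \<inter> space M \<inter> E" for v
  have Ssets: "S v \<in> sets M" for v
    using simple_functionD(2)[OF g, of "{v}"] E unfolding S_def by blast
  have Sfin: "emeasure M (S v) < \<infinity>" for v
    using E Ssets[of v] emeasure_mono[of "S v" E M] unfolding S_def by (meson Int_lower2 le_less_trans)
  have Esub: "E \<subseteq> space M" using E sets.sets_into_space by blast
  have eq: "g x * indicator E x = (\<Sum>v\<in>V. v * indicator (S v) x)" for x
  proof (cases "x \<in> E")
    case True
    then have xs: "x \<in> space M" using Esub by blast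
    have "(\<Sum>v\<in>V. v * indicator (S v) x) = (\<Sum>v\<in>V. if v = g x then g x else 0)"
      by (rule sum.cong) (auto simp: S_def indicator_def True xs)
    also have "\<dots> = g x" using finV xs by (simp add: V_def)
    finally show ?thesis using True by simp
  next
    case False
    then show ?thesis by (simp add: S_def indicator_def)
  qed
  obtain h where h: "bij_betw h {0..<card V} V" using ex_bij_betw_nat_finite[OF finV] by blast
  have "(\<Sum>v\<in>V. v * indicator (S v) x) = (\<Sum>i\<in>{0..<card V}. h i * indicator (S (h i)) x)" for x
    using sum.reindex_bij_betw[OF h, of "\<lambda>v. v * indicator (S v) x"] by simp
  then have eqf: "(\<lambda>x. g x * indicator E x) = (\<lambda>x. \<Sum>i\<in>{0..<card V}. h i * indicator (S (h i)) x)"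
    using eq by auto
  have "\<exists>(I::nat set) c E'. (\<lambda>x. g x * indicator E x) = (\<lambda>x. \<Sum>i\<in>I. c i * indicator (E' i) x) \<and> finite I \<and>
      (\<forall>i\<in>I. E' i \<in> sets M \<and> emeasure M (E' i) < \<infinity>)"
    apply (rule exI[where x="{0..<card V}"], rule exI[where x=h], rule exI[where x="\<lambda>i. S (h i)"])
    using Ssets Sfin eqf by auto
  then show ?thesis unfolding simple_span_def by blast
qed

theorem proposition3p28:
  fixes M :: "'a measure" and \<rho> :: "('a \<Rightarrow> ennreal) \<Rightarrow> ennreal"
  assumes "sigma_finite_measure M"
    and "function_quasi_norm M \<rho>"
  shows "(L_rho_d M \<rho> :: ('a \<Rightarrow> 'b::{real_normed_field, second_countable_topology}) set)
           \<subseteq> L_rho_b M \<rho>"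
proof
  fix f :: "'a \<Rightarrow> 'b"
  assume fd: "f \<in> L_rho_d M \<rho>"
  then have fL: "f \<in> L_rho M \<rho>" and dom: "dominating M \<rho> (fmod f)"
    unfolding L_rho_d_def by auto
  then have fm[measurable]: "f \<in> borel_measurable M" unfolding L_rho_def by auto
  have F1: "\<And>f t. f \<in> borel_measurable M \<Longrightarrow> t \<ge> 0 \<Longrightarrow> \<rho> (\<lambda>x. ennreal t * f x) = ennreal t * \<rho> f"
    and F2: "\<And>f g. f \<in> borel_measurable M \<Longrightarrow> g \<in> borel_measurable M \<Longrightarrow> (AE x in M. f x \<le> g x) \<Longrightarrow> \<rho> f \<le> \<rho> g"
    using assms(2) unfolding function_quasi_norm_def by auto
  from borel_measurable_implies_sequence_metric[OF fm, of 0] obtain F where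
    Fs: "\<And>i. simple_function M (F i)" and
    Flim: "\<And>x. x \<in> space M \<Longrightarrow> (\<lambda>i. F i x) \<longlonglongrightarrow> f x" and
    Fb: "\<And>i x. x \<in> space M \<Longrightarrow> norm (F i x) \<le> 2 * norm (f x)"
    unfolding dist_norm diff_zero by blast
  have Fm[measurable]: "\<And>i. F i \<in> borel_measurable M"
    using Fs by (rule borel_measurable_simple_function)
  obtain A :: "nat \<Rightarrow> 'a set" where A: "range A \<subseteq> sets M" "(\<Union>i. A i) = space M"
    "\<And>i. emeasure M (A i) \<noteq> \<infinity>" "incseq A"
    using sigma_finite_measure.sigma_finite_incseq[OF assms(1)] by metis
  have Am[measurable]: "\<And>i. A i \<in> sets M" using A(1) by auto
  define s where "s k x = F k x * indicator (A k) x" for k x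
  have s_span: "s k \<in> simple_span M" for k
    unfolding s_def[abs_def] using simple_in_span[OF Fs Am] A(3) by (simp add: less_top)
  have sm[measurable]: "\<And>k. s k \<in> borel_measurable M" unfolding s_def[abs_def] by measurable
  have slim: "(\<lambda>k. s k x) \<longlonglongrightarrow> f x" if x: "x \<in> space M" for x
  proof -
    obtain m where "x \<in> A m" using A(2) x by blast
    then have "\<forall>k\<ge>m. x \<in> A k" using A(4) unfolding incseq_def by blast
    then have "\<forall>k\<ge>m. F k x = s k x" unfolding s_def by simp
    then have "eventually (\<lambda>k. F k x = s k x) sequentially" unfolding eventually_sequentially by blast
    then show ?thesis by (rule Lim_transform_eventually[OF Flim[OF x]])
  qed
  have sb: "norm (f x - s k x) \<le> 3 * norm (f x)" if x: "x \<in> space M" for x k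
  proof -
    have "norm (s k x) \<le> norm (F k x)" unfolding s_def by (simp add: indicator_def)
    then have "norm (s k x) \<le> 2 * norm (f x)" using Fb[OF x, of k] by linarith
    then show ?thesis using norm_triangle_ineq4[of "f x" "s k x"] by linarith
  qed
  define a where "a k x = ennreal (norm (f x - s k x) / 3)" for k x
  define gs where "gs n x = (SUP k\<in>{n..}. a k x)" for n x
  have am[measurable]: "\<And>k. a k \<in> borel_measurable M" unfolding a_def[abs_def] by measurable
  have gsm: "\<And>n. gs n \<in> borel_measurable M" unfolding gs_def[abs_def]
    by (intro borel_measurable_SUP am) auto
  have dec: "gs (Suc n) x \<le> gs n x" for n x
    unfolding gs_def by (rule SUP_subset_mono) auto
  have decs: "decseq (\<lambda>n. gs n x)" for x
    using dec by (simp add: decseq_Suc_iff)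
  have g0: "gs 0 x \<le> fmod f x" if "x \<in> space M" for x
    unfolding gs_def fmod_def
  proof (rule SUP_least)
    fix k assume "k \<in> {0::nat..}"
    show "a k x \<le> ennreal (norm (f x))"
      unfolding a_def using sb[OF that, of k] by (intro ennreal_leI) simp
  qed
  have glim: "(\<lambda>n. gs n x) \<longlonglongrightarrow> 0" if x: "x \<in> space M" for x
  proof -
    have "(\<lambda>k. norm (f x - s k x) / 3) \<longlonglongrightarrow> 0"
    proof -
      have "(\<lambda>k. f x - s k x) \<longlonglongrightarrow> 0" using tendsto_diff[OF tendsto_const[of "f x"] slim[OF x]] by simp
      then have "(\<lambda>k. norm (f x - s k x)) \<longlonglongrightarrow> 0" by (rule tendsto_norm_zero)
      then show ?thesis using tendsto_divide[of _ 0 _ "\<lambda>_. 3::real" 3] by simp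
    qed
    then have "(\<lambda>k. a k x) \<longlonglongrightarrow> 0" unfolding a_def using tendsto_ennrealI by fastforce
    then have "limsup (\<lambda>k. a k x) = 0" by (intro lim_imp_Limsup) auto
    then have "(INF n. gs n x) = 0" unfolding gs_def limsup_INF_SUP by simp
    then show ?thesis using LIMSEQ_INF[OF decs[of x]] by simp
  qed
  have "(\<lambda>n. \<rho> (gs n)) \<longlonglongrightarrow> 0"
    using dom unfolding dominating_def
    using gsm dec g0 glim by (auto intro!: AE_I2)
  then have lim3: "(\<lambda>n. ennreal 3 * \<rho> (gs n)) \<longlonglongrightarrow> 0"
    using ennreal_tendsto_cmult[of "ennreal 3"] by fastforce
  have bound: "\<rho> (fmod (\<lambda>x. f x - s n x)) \<le> ennreal 3 * \<rho> (gs n)" for n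
  proof -
    have "fmod (\<lambda>x. f x - s n x) = (\<lambda>x. ennreal 3 * a n x)"
      unfolding fmod_def a_def
    proof (rule ext)
      fix x
      have "ennreal (norm (f x - s n x)) = ennreal (3 * (norm (f x - s n x) / 3))" by simp
      also have "\<dots> = ennreal 3 * ennreal (norm (f x - s n x) / 3)" by (rule ennreal_mult) auto
      finally show "ennreal (norm (f x - s n x)) = ennreal 3 * ennreal (norm (f x - s n x) / 3)" .
    qed
    then have "\<rho> (fmod (\<lambda>x. f x - s n x)) = ennreal 3 * \<rho> (a n)"
      using F1[OF am, of 3 n] by simp
    also have "\<rho> (a n) \<le> \<rho> (gs n)"
      using gsm by (intro F2 am AE_I2) (auto simp: gs_def intro: SUP_upper)
    then have "ennreal 3 * \<rho> (a n) \<le> ennreal 3 * \<rho> (gs n)" by (rule mult_left_mono) simp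
    finally show ?thesis .
  qed
  show "f \<in> L_rho_b M \<rho>"
    unfolding L_rho_b_def
  proof (intro CollectI conjI allI impI fL)
    fix \<epsilon> :: real assume "\<epsilon> > 0"
    then have "eventually (\<lambda>n. ennreal 3 * \<rho> (gs n) < ennreal \<epsilon>) sequentially"
      using lim3 by (intro order_tendstoD(2)) auto
    then obtain n where "ennreal 3 * \<rho> (gs n) < ennreal \<epsilon>" by (auto simp: eventually_sequentially)
    then have "\<rho> (fmod (\<lambda>x. f x - s n x)) < ennreal \<epsilon>" using bound[of n] by (rule le_less_trans[rotated])
    then show "\<exists>s\<in>simple_span M. \<rho> (fmod (\<lambda>x. f x - s x)) < ennreal \<epsilon>" using s_span by blast
  qed
qed

end
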